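(* Let $q_1,\ldots,q_g$ be binary quadratic forms with integer coefficients, let $D\in\mathbb N$, $\mathbf z\in\mathbb Z^2$, and let $d_1,\ldots,d_g$ be positive integers with $\gcd(d_i,D)=1$ for $i=1,\ldots,g$. Then for every $\mathcal R\subset\mathbb R^2$, $$\#(\Lambda_{\mathbf d}\cap\mathcal R\cap\Psi)=\sum_{b\mid\psi(\mathbf d)}\#\bigl(\Lambda^*_{\mathbf c}\cap\mathcal R/b\cap\Psi_b\bigr),$$ where, for each $b$, $\mathbf c=(c_1,\ldots,c_g)$ with $c_i:=d_i/\gcd(d_i,b^2)$.
   Context: $\Lambda_{\mathbf d}:=\{\mathbf x\in\mathbb Z^2:d_i\mid q_i(\mathbf x),\ i=1,\ldots,g\}$; $\Lambda^*_{\mathbf c}:=\{\mathbf x\in\Lambda_{\mathbf c}:\gcd(x_1,x_2,c_1\cdots c_g)=1\}$; $\Psi:=\{\mathbf x\in\mathbb Z^2:\mathbf x\equiv\mathbf z\pmod D\}$; $\Psi_b:=\{\mathbf x\in\mathbb Z^2:b\mathbf x\in\Psi\}$; $\mathcal R/b:=\{\mathbf y/b:\mathbf y\in\mathcal R\}$. The function $\psi$ on $g$-tuples of positive integers is multiplicative (i.e. $\psi(\mathbf d)=\prod_p\psi(p^{v_p(d_1)},\ldots,p^{v_p(d_g)})$) with $\psi(p^{\alpha_1},\ldots,p^{\alpha_g}):=p^{\lceil\max(\alpha_1,\ldots,\alpha_g)/2\rceil}$. *)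

theory Defs
  imports Complex_Main "HOL-Library.Extended_Nat" "HOL-Number_Theory.Number_Theory"
begin

definition qf :: "int \<times> int \<times> int \<Rightarrow> int \<times> int \<Rightarrow> int" where
  "qf abc x = (case abc of (a, b, c) \<Rightarrow>
      a * (fst x)^2 + b * fst x * snd x + c * (snd x)^2)"

definition ecard :: "'a set \<Rightarrow> enat" where
  "ecard A = (if finite A then enat (card A) else \<infinity>)"

definition Lambda :: "nat \<Rightarrow> (nat \<Rightarrow> int \<times> int \<times> int) \<Rightarrow> (nat \<Rightarrow> nat) \<Rightarrow> (int \<times> int) set" where
  "Lambda g q d = {x. \<forall>i<g. int (d i) dvd qf (q i) x}"

definition Lambda_star :: "nat \<Rightarrow> (nat \<Rightarrow> int \<times> int \<times> int) \<Rightarrow> (nat \<Rightarrow> nat) \<Rightarrow> (int \<times> int) set" where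
  "Lambda_star g q c = {x \<in> Lambda g q c.
      gcd (fst x) (gcd (snd x) (\<Prod>i<g. int (c i))) = 1}"

definition Psi :: "nat \<Rightarrow> int \<times> int \<Rightarrow> (int \<times> int) set" where
  "Psi D z = {x. [fst x = fst z] (mod int D) \<and> [snd x = snd z] (mod int D)}"

definition Psi_b :: "nat \<Rightarrow> int \<times> int \<Rightarrow> nat \<Rightarrow> (int \<times> int) set" where
  "Psi_b D z b = {x. (int b * fst x, int b * snd x) \<in> Psi D z}"

definition int_pts :: "(real \<times> real) set \<Rightarrow> (int \<times> int) set" where
  "int_pts R = {x. (real_of_int (fst x), real_of_int (snd x)) \<in> R}"

definition scale_div :: "(real \<times> real) set \<Rightarrow> nat \<Rightarrow> (real \<times> real) set" where
  "scale_div R b = (\<lambda>y. (fst y / real b, snd y / real b)) ` R"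

definition psi :: "nat \<Rightarrow> (nat \<Rightarrow> nat) \<Rightarrow> nat" where
  "psi g d = (\<Prod>p\<in>(\<Union>i<g. prime_factors (d i)).
      p ^ ((Max ((\<lambda>i. multiplicity p (d i)) ` {..<g}) + 1) div 2))"

end

theory Submission
  imports Defs
begin

lemma psi_facts:
  assumes "\<forall>i<g. d i > 0"
  shows psi_pos: "psi g d > 0"
    and psi_dvd_sq: "\<And>i. i < g \<Longrightarrow> d i dvd (psi g d)^2"
    and psi_min: "\<And>n. n > 0 \<Longrightarrow> (\<forall>i<g. d i dvd n^2) \<Longrightarrow> psi g d dvd n"
proof -
  define PF where "PF = (\<Union>i<g. prime_factors (d i))"
  define M where "M = (\<lambda>p. Max ((\<lambda>i. multiplicity p (d i)) ` {..<g}))"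
  have fin: "finite PF" unfolding PF_def by auto
  have pr: "\<And>x. x \<in> PF \<Longrightarrow> prime x" unfolding PF_def by auto
  have psi_eq: "psi g d = (\<Prod>p\<in>PF. p ^ ((M p + 1) div 2))"
    unfolding psi_def PF_def M_def by simp
  have mult: "multiplicity p (psi g d) = (if p \<in> PF then (M p + 1) div 2 else 0)" if "prime p" for p
    unfolding psi_eq by (rule multiplicity_prod_prime_powers[OF fin pr that])
  show pos: "psi g d > 0" unfolding psi_eq
    using pr by (simp add: prime_gt_0_nat prod_pos)
  show "d i dvd (psi g d)^2" if "i < g" for i
  proof (rule multiplicity_le_imp_dvd)
    show "d i \<noteq> 0" using assms that by auto
    fix p :: nat assume p: "prime p"
    show "multiplicity p (d i) \<le> multiplicity p ((psi g d)^2)"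
    proof (cases "multiplicity p (d i) = 0")
      case True then show ?thesis by simp
    next
      case False
      then have "p \<in> prime_factors (d i)" using p \<open>d i \<noteq> 0\<close>
        by (auto simp: prime_factors_multiplicity)
      then have inPF: "p \<in> PF" unfolding PF_def using that by auto
      have "multiplicity p (d i) \<le> M p" unfolding M_def using that by (intro Max_ge) auto
      moreover have "multiplicity p ((psi g d)^2) = 2 * ((M p + 1) div 2)"
        using prime_elem_multiplicity_power_distrib[of p "psi g d" 2] p pos mult[OF p] inPF by simp
      ultimately show ?thesis by linarith
    qed
  qed
  show "psi g d dvd n" if n: "n > 0" and dv: "\<forall>i<g. d i dvd n^2" for n
  proof (rule multiplicity_le_imp_dvd)
    show "psi g d \<noteq> 0" using pos by simp
    fix p :: nat assume p: "prime p"
    show "multiplicity p (psi g d) \<le> multiplicity p n"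
    proof (cases "p \<in> PF")
      case False then show ?thesis using mult[OF p] by simp
    next
      case True
      then have "g > 0" unfolding PF_def by auto
      then have "M p \<in> (\<lambda>i. multiplicity p (d i)) ` {..<g}" unfolding M_def
        by (intro Max_in) auto
      then obtain i where i: "i < g" "M p = multiplicity p (d i)" by auto
      have "multiplicity p (d i) \<le> multiplicity p (n^2)"
        using dv i n by (intro dvd_imp_multiplicity_le) auto
      also have "\<dots> = 2 * multiplicity p n"
        using prime_elem_multiplicity_power_distrib[of p n 2] p n by simp
      finally show ?thesis using mult[OF p] True i by simp
    qed
  qed
qed

lemma dvd_mult_iff_div_gcd:
  fixes a k Q :: int
  assumes "a \<noteq> 0"
  shows "a dvd k * Q \<longleftrightarrow> a div gcd a k dvd Q"
proof -
  define e where "e = gcd a k"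
  have e0: "e \<noteq> 0" using assms by (simp add: e_def)
  obtain c' where a: "a = e * c'" unfolding e_def by (meson gcd_dvd1 dvdE)
  obtain k' where k: "k = e * k'" unfolding e_def by (meson gcd_dvd2 dvdE)
  have cop: "coprime c' k'"
  proof -
    have eg: "e \<ge> 0" by (simp add: e_def)
    have "gcd a k = gcd (e*c') (e*k')" using a k by simp
    also have "\<dots> = e * gcd c' k'" using gcd_mult_distrib_int[of e c' k'] eg by simp
    finally have "e = e * gcd c' k'" by (simp add: e_def)
    then have "gcd c' k' = 1" using e0 by simp
    then show ?thesis by (simp add: coprime_iff_gcd_eq_1)
  qed
  have "a div e = c'" using a e0 by simp
  moreover have "a dvd k * Q \<longleftrightarrow> c' dvd k' * Q" using a k e0 by (simp add: mult.assoc)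
  moreover have "c' dvd k' * Q \<longleftrightarrow> c' dvd Q" using cop
    by (simp add: coprime_dvd_mult_right_iff)
  ultimately show ?thesis by (simp add: e_def)
qed

lemma ecard_Un_disj:
  assumes "A \<inter> B = {}"
  shows "ecard (A \<union> B) = ecard A + ecard B"
proof (cases "finite A \<and> finite B")
  case True
  then show ?thesis using assms by (simp add: ecard_def card_Un_disjoint)
next
  case False
  then show ?thesis by (auto simp: ecard_def)
qed

lemma ecard_UN:
  assumes "finite I" "\<forall>i\<in>I. \<forall>j\<in>I. i \<noteq> j \<longrightarrow> A i \<inter> A j = {}"
  shows "ecard (\<Union>i\<in>I. A i) = (\<Sum>i\<in>I. ecard (A i))"
  using assms
proof (induction I rule: finite_induct)
  case empty
  then show ?case by (simp add: ecard_def zero_enat_def)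
next
  case (insert x F)
  have "\<forall>i\<in>F. A x \<inter> A i = {}" using insert.prems insert.hyps(2) by (metis insertCI)
  then have "A x \<inter> (\<Union>i\<in>F. A i) = {}" by blast
  then have "ecard (\<Union>i\<in>insert x F. A i) = ecard (A x) + ecard (\<Union>i\<in>F. A i)"
    by (simp add: ecard_Un_disj)
  also have "ecard (\<Union>i\<in>F. A i) = (\<Sum>i\<in>F. ecard (A i))"
    using insert.IH insert.prems by blast
  finally show ?case using insert.hyps by simp
qed

lemma ecard_image: "inj_on f A \<Longrightarrow> ecard (f ` A) = ecard A"
  by (simp add: ecard_def finite_image_iff card_image)

lemma qf_scale: "qf abc (k * fst y, k * snd y) = k^2 * qf abc y"
  by (cases abc) (simp add: qf_def algebra_simps power2_eq_square)

lemma int_pts_scale: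
  assumes "b > 0"
  shows "y \<in> int_pts (scale_div R b) \<longleftrightarrow> (int b * fst y, int b * snd y) \<in> int_pts R"
proof
  assume "y \<in> int_pts (scale_div R b)"
  then obtain r where r: "r \<in> R" "real_of_int (fst y) = fst r / real b" "real_of_int (snd y) = snd r / real b"
    by (auto simp: int_pts_def scale_div_def)
  then have "fst r = real b * real_of_int (fst y)" "snd r = real b * real_of_int (snd y)"
    using assms by (auto simp: field_simps)
  then have "r = (real_of_int (int b * fst y), real_of_int (int b * snd y))"
    by (simp add: prod_eq_iff)
  then show "(int b * fst y, int b * snd y) \<in> int_pts R" using r by (simp add: int_pts_def)
next
  assume "(int b * fst y, int b * snd y) \<in> int_pts R"
  then have r: "(real b * real_of_int (fst y), real b * real_of_int (snd y)) \<in> R"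
    by (simp add: int_pts_def)
  have "(real_of_int (fst y), real_of_int (snd y)) =
     (\<lambda>y. (fst y / real b, snd y / real b)) (real b * real_of_int (fst y), real b * real_of_int (snd y))"
    using assms by simp
  then show "y \<in> int_pts (scale_div R b)" using r
    unfolding int_pts_def scale_div_def by (metis (no_types, lifting) image_eqI mem_Collect_eq)
qed

lemma Lambda_scale:
  assumes "b > 0" "\<forall>i<g. d i > 0"
  shows "(int b * fst y, int b * snd y) \<in> Lambda g q d \<longleftrightarrow>
         y \<in> Lambda g q (\<lambda>i. d i div gcd (d i) (b^2))"
proof -
  have "int (d i) dvd (int b)^2 * qf (q i) y \<longleftrightarrow> int (d i div gcd (d i) (b^2)) dvd qf (q i) y"
    if i: "i < g" for i
  proof -
    have "int (d i div gcd (d i) (b^2)) = int (d i) div gcd (int (d i)) ((int b)^2)"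
    proof -
      have gg: "int (gcd (d i) (b^2)) = gcd (int (d i)) ((int b)^2)" by (metis gcd_int_int_eq of_nat_power)
      show ?thesis by (simp only: zdiv_int gg)
    qed
    moreover have "int (d i) \<noteq> 0" using assms i by simp
    ultimately show ?thesis using dvd_mult_iff_div_gcd by simp
  qed
  then show ?thesis unfolding Lambda_def by (simp add: qf_scale)
qed

lemma key_gcd:
  fixes b P gy :: int
  assumes "b > 0" "b dvd P"
  shows "gcd (b * gy) P = b \<longleftrightarrow> coprime gy (P div b)"
proof -
  obtain P' where P: "P = b * P'" using assms by blast
  have Pd: "P div b = P'" using P assms by simp
  have "gcd (b * gy) P = \<bar>b\<bar> * gcd gy P'" unfolding P
    by (rule gcd_mult_distrib_int[symmetric])
  then have g: "gcd (b * gy) P = b * gcd gy P'" using assms by simp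
  have "b * gcd gy P' = b \<longleftrightarrow> gcd gy P' = 1" using assms by simp
  then show ?thesis using g Pd by (simp only: coprime_iff_gcd_eq_1)
qed

lemma lemB:
  fixes b P gy :: int and Dv :: "nat \<Rightarrow> int" and g :: nat
  assumes "b > 0" "b dvd P" "coprime gy (P div b)"
    and "\<forall>i<g. Dv i dvd P^2" "\<forall>i<g. Dv i \<noteq> 0"
  shows "coprime gy (\<Prod>i<g. Dv i div gcd (Dv i) (b^2))"
proof (rule prod_coprime_right)
  fix i assume "i \<in> {..<g}"
  then have i: "i < g" by simp
  obtain P' where P: "P = b * P'" using assms by blast
  have Pd: "P div b = P'" using P assms by simp
  have "Dv i dvd P^2" using assms(4) i by blast
  then have "Dv i dvd b^2 * P'^2" unfolding P by (simp only: power_mult_distrib)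
  moreover have "Dv i \<noteq> 0" using assms(5) i by blast
  ultimately have c: "Dv i div gcd (Dv i) (b^2) dvd P'^2"
    using dvd_mult_iff_div_gcd by blast
  have "coprime gy P'" using assms(3) Pd by simp
  then have "coprime gy (P'^2)" by simp
  then show "coprime gy (Dv i div gcd (Dv i) (b^2))"
    using coprime_divisors[OF dvd_refl c] by blast
qed

lemma lemA:
  fixes b P gy :: int and Dv :: "nat \<Rightarrow> int" and g :: nat
  assumes "b > 0" "b dvd P" "P > 0"
    and cop: "coprime gy (\<Prod>i<g. Dv i div gcd (Dv i) (b^2))"
    and minP: "\<And>N. N > 0 \<Longrightarrow> \<forall>i<g. Dv i dvd N^2 \<Longrightarrow> P dvd N"
    and sq: "\<forall>i<g. Dv i dvd P^2" and nz: "\<forall>i<g. Dv i \<noteq> 0"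
  shows "coprime gy (P div b)"
proof (rule ccontr)
  assume nc: "\<not> coprime gy (P div b)"
  obtain P' where P: "P = b * P'" using assms by blast
  have Pd: "P div b = P'" using P assms by simp
  have P'0: "P' > 0" using P assms by (simp add: zero_less_mult_iff)
  have "gcd gy P' \<noteq> 0" using P'0 by simp
  moreover have "\<not> is_unit (gcd gy P')" using nc Pd
    by (simp add: coprime_iff_gcd_eq_1)
  ultimately obtain p where p: "prime p" "p dvd gcd gy P'" using prime_divisor_exists by blast
  have pgy: "p dvd gy" and pP: "p dvd P'" using p by auto
  obtain t where t: "P' = p * t" using pP by blast
  have p1: "p > 1" using p prime_gt_1_int by blast
  have t0: "t > 0" using t P'0 p1 by (simp add: zero_less_mult_iff)
  define N where "N = b * t"
  have N0: "N > 0" using N_def t0 assms by simp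
  have "\<forall>i<g. Dv i dvd N^2"
  proof (intro allI impI)
    fix i assume i: "i < g"
    define ci where "ci = Dv i div gcd (Dv i) (b^2)"
    have "ci dvd (\<Prod>i<g. Dv i div gcd (Dv i) (b^2))" unfolding ci_def
      using i by (intro dvd_prodI) auto
    then have "\<not> p dvd ci" using cop pgy p
      by (meson coprime_common_divisor dvd_trans not_prime_unit)
    then have "coprime p ci" using p by (simp add: prime_imp_coprime)
    then have copc: "coprime ci (p^2)" by (simp add: coprime_commute)
    have "Dv i = gcd (Dv i) (b^2) * ci" unfolding ci_def by simp
    also have "\<dots> dvd b^2 * ci" by (intro mult_dvd_mono) auto
    finally have D1: "Dv i dvd b^2 * ci" .
    have D2: "Dv i dvd b^2 * (p^2 * t^2)" using sq i P t
      by (simp add: power_mult_distrib mult.assoc)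
    have "Dv i dvd gcd (b^2 * (p^2 * t^2)) (b^2 * ci)" using D1 D2 by simp
    also have "gcd (b^2 * (p^2 * t^2)) (b^2 * ci) = b^2 * gcd (p^2 * t^2) ci"
      by (metis gcd_mult_distrib_int abs_of_nonneg zero_le_power2)
    also have "gcd (p^2 * t^2) ci = gcd (t^2) ci" using copc
      by (rule gcd_mult_left_left_cancel)
    also have "b^2 * gcd (t^2) ci dvd b^2 * t^2" by simp
    finally show "Dv i dvd N^2" by (simp add: N_def power_mult_distrib)
  qed
  then have "P dvd N" using minP N0 by blast
  then have "b * (p * t) dvd b * t" using P t N_def by simp
  then have "p * t dvd 1 * t" using assms by simp
  then have "p dvd 1" using t0 by (subst (asm) dvd_mult_cancel_right) simp
  then show False using p1 by simp
qed

theorem lemma2p2: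
  fixes g :: nat and q :: "nat \<Rightarrow> int \<times> int \<times> int" and D :: nat
    and z :: "int \<times> int" and d :: "nat \<Rightarrow> nat" and R :: "(real \<times> real) set"
  assumes "\<forall>i<g. d i > 0"
    and "\<forall>i<g. coprime (d i) D"
  shows "ecard (Lambda g q d \<inter> int_pts R \<inter> Psi D z) =
    (\<Sum>b\<in>{b. b dvd psi g d}.
       ecard (Lambda_star g q (\<lambda>i. d i div gcd (d i) (b^2))
              \<inter> int_pts (scale_div R b) \<inter> Psi_b D z b))"
proof -
  define Pn where "Pn = psi g d"
  define P where "P = int Pn"
  define Dv where "Dv = (\<lambda>i. int (d i))"
  define S where "S = Lambda g q d \<inter> int_pts R \<inter> Psi D z"
  define T where "T = (\<lambda>b. Lambda_star g q (\<lambda>i. d i div gcd (d i) (b^2))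
              \<inter> int_pts (scale_div R b) \<inter> Psi_b D z b)"
  define f where "f = (\<lambda>(b::nat) (y::int\<times>int). (int b * fst y, int b * snd y))"
  define B where "B = {b. b dvd Pn}"
  have Pn0: "Pn > 0" unfolding Pn_def using psi_pos[OF assms(1)] .
  have P0: "P > 0" unfolding P_def using Pn0 by simp
  have finB: "finite B" unfolding B_def using Pn0 by simp
  have Bpos: "b > 0" if "b \<in> B" for b using that Pn0 unfolding B_def by (cases "b = 0") auto
  have BdvdP: "int b dvd P" if "b \<in> B" for b using that unfolding B_def P_def by simp
  have sq: "\<forall>i<g. Dv i dvd P^2"
  proof (intro allI impI)
    fix i assume "i < g"
    then have "d i dvd Pn^2" unfolding Pn_def by (rule psi_dvd_sq[OF assms(1)])
    then show "Dv i dvd P^2" unfolding Dv_def P_def by (metis int_dvd_int_iff of_nat_power)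
  qed
  have nz: "\<forall>i<g. Dv i \<noteq> 0" using assms(1) unfolding Dv_def by simp
  have minP: "P dvd N" if N: "N > 0" "\<forall>i<g. Dv i dvd N^2" for N
  proof -
    have "\<forall>i<g. d i dvd (nat N)^2"
    proof (intro allI impI)
      fix i assume "i < g"
      then have "int (d i) dvd N^2" using N unfolding Dv_def by blast
      also have "N^2 = int ((nat N)^2)" using N by simp
      finally show "d i dvd (nat N)^2" by (simp only: int_dvd_int_iff)
    qed
    then have "Pn dvd nat N" unfolding Pn_def using psi_min[OF assms(1)] N by simp
    then show ?thesis unfolding P_def using N by (metis int_dvd_int_iff int_nat_eq less_le)
  qed
  have cop_iff: "coprime gy (\<Prod>i<g. Dv i div gcd (Dv i) ((int b)^2)) \<longleftrightarrow> coprime gy (P div int b)"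
    if "b \<in> B" for b gy
  proof -
    have b0: "int b > 0" using Bpos[OF that] by simp
    have bd: "int b dvd P" using BdvdP[OF that] .
    show ?thesis
    proof
      assume "coprime gy (\<Prod>i<g. Dv i div gcd (Dv i) ((int b)^2))"
      then show "coprime gy (P div int b)"
        by (rule lemA[OF b0 bd P0 _ minP sq nz])
    next
      assume "coprime gy (P div int b)"
      then show "coprime gy (\<Prod>i<g. Dv i div gcd (Dv i) ((int b)^2))"
        by (rule lemB[OF b0 bd _ sq nz])
    qed
  qed
  have mem: "y \<in> T b \<longleftrightarrow> f b y \<in> S \<and> coprime (gcd (fst y) (snd y)) (P div int b)"
    if b: "b \<in> B" for b y
  proof -
    have b0: "b > 0" using Bpos[OF b] .
    have eqi: "int (d i div gcd (d i) (b^2)) = Dv i div gcd (Dv i) ((int b)^2)" for i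
    proof -
      have gg: "int (gcd (d i) (b^2)) = gcd (int (d i)) ((int b)^2)" by (metis gcd_int_int_eq of_nat_power)
      show ?thesis unfolding Dv_def by (simp only: zdiv_int gg)
    qed
    have prodc: "(\<Prod>i<g. int (d i div gcd (d i) (b^2))) = (\<Prod>i<g. Dv i div gcd (Dv i) ((int b)^2))"
      by (rule prod.cong[OF refl]) (rule eqi)
    have star: "gcd (fst y) (gcd (snd y) (\<Prod>i<g. int (d i div gcd (d i) (b^2)))) = 1 \<longleftrightarrow>
        coprime (gcd (fst y) (snd y)) (P div int b)"
    proof -
      have "gcd (fst y) (gcd (snd y) (\<Prod>i<g. int (d i div gcd (d i) (b^2)))) = 
            gcd (gcd (fst y) (snd y)) (\<Prod>i<g. Dv i div gcd (Dv i) ((int b)^2))"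
        unfolding prodc by (rule gcd.assoc[symmetric])
      then have "gcd (fst y) (gcd (snd y) (\<Prod>i<g. int (d i div gcd (d i) (b^2)))) = 1 \<longleftrightarrow>
         coprime (gcd (fst y) (snd y)) (\<Prod>i<g. Dv i div gcd (Dv i) ((int b)^2))"
        by (simp only: coprime_iff_gcd_eq_1)
      then show ?thesis using cop_iff[OF b] by (simp only:)
    qed
    have "y \<in> T b \<longleftrightarrow> (y \<in> Lambda g q (\<lambda>i. d i div gcd (d i) (b^2)) \<and>
        gcd (fst y) (gcd (snd y) (\<Prod>i<g. int (d i div gcd (d i) (b^2)))) = 1)
        \<and> f b y \<in> int_pts R \<and> f b y \<in> Psi D z"
      unfolding T_def Lambda_star_def f_def Psi_b_def by (simp only: Int_iff mem_Collect_eq int_pts_scale[OF b0] conj_assoc)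
    also have "\<dots> \<longleftrightarrow> f b y \<in> S \<and> coprime (gcd (fst y) (snd y)) (P div int b)"
      unfolding S_def f_def Int_iff star Lambda_scale[OF b0 assms(1), where q=q and y=y] by (rule iffI) (elim conjE; intro conjI; assumption)+
    finally show ?thesis .
  qed
  have gcd_f: "gcd (gcd (fst (f b y)) (snd (f b y))) P = int b"
    if "b \<in> B" "y \<in> T b" for b y
  proof -
    have c: "coprime (gcd (fst y) (snd y)) (P div int b)" using mem that by blast
    have "gcd (fst (f b y)) (snd (f b y)) = int b * gcd (fst y) (snd y)"
      unfolding f_def by (simp add: gcd_mult_left abs_mult)
    moreover have "int b > 0" using Bpos[OF that(1)] by simp
    ultimately show ?thesis using key_gcd[OF _ BdvdP[OF that(1)], where gy="gcd (fst y) (snd y)"] c by simp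
  qed
  have Seq: "S = (\<Union>b\<in>B. f b ` T b)"
  proof
    show "(\<Union>b\<in>B. f b ` T b) \<subseteq> S"
    proof
      fix x assume "x \<in> (\<Union>b\<in>B. f b ` T b)"
      then obtain b y where hb: "b \<in> B" "y \<in> T b" "x = f b y" by blast
      show "x \<in> S" using mem[OF hb(1), of y] hb(2) hb(3) by simp
    qed
  next
    show "S \<subseteq> (\<Union>b\<in>B. f b ` T b)"
    proof
      fix x assume x: "x \<in> S"
      define bi where "bi = gcd (gcd (fst x) (snd x)) P"
      have bi0: "bi > 0" unfolding bi_def using P0 by simp
      define b where "b = nat bi"
      have bb: "int b = bi" unfolding b_def using bi0 by simp
      have bP: "bi dvd P" unfolding bi_def by simp
      then have "int b dvd int Pn" using bb unfolding P_def by simp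
      then have bB: "b \<in> B" unfolding B_def by (simp only: int_dvd_int_iff mem_Collect_eq)
      have b2: "bi dvd gcd (fst x) (snd x)" unfolding bi_def by (rule gcd_dvd1)
      have b1: "bi dvd fst x" "bi dvd snd x" using dvd_trans[OF b2 gcd_dvd1] dvd_trans[OF b2 gcd_dvd2] by auto
      define y where "y = (fst x div bi, snd x div bi)"
      have fy: "f b y = x" unfolding f_def y_def using bb b1 by (simp add: prod_eq_iff)
      have "gcd (bi * fst y) (bi * snd y) = bi * gcd (fst y) (snd y)"
        using bi0 by (simp add: gcd_mult_left abs_mult)
      moreover have "x = (bi * fst y, bi * snd y)" using fy bb unfolding f_def by simp
      ultimately have "gcd (fst x) (snd x) = bi * gcd (fst y) (snd y)" by simp
      moreover have "gcd (gcd (fst x) (snd x)) P = bi" unfolding bi_def ..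
      ultimately have "gcd (bi * gcd (fst y) (snd y)) P = bi" by (simp only:)
      then have "coprime (gcd (fst y) (snd y)) (P div bi)" using key_gcd[OF bi0 bP] by simp
      then have "y \<in> T b" using mem[OF bB] fy x bb by simp
      then show "x \<in> (\<Union>b\<in>B. f b ` T b)" using bB fy by blast
    qed
  qed
  have disj: "\<forall>i\<in>B. \<forall>j\<in>B. i \<noteq> j \<longrightarrow> f i ` T i \<inter> f j ` T j = {}"
  proof (intro ballI impI)
    fix i j assume ij: "i \<in> B" "j \<in> B" "i \<noteq> j"
    show "f i ` T i \<inter> f j ` T j = {}"
    proof (rule ccontr)
      assume "f i ` T i \<inter> f j ` T j \<noteq> {}"
      then obtain y y' where y: "y \<in> T i" "y' \<in> T j" "f i y = f j y'" by blast
      have "int i = int j" using gcd_f[OF ij(1) y(1)] gcd_f[OF ij(2) y(2)] y(3) by simp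
      then show False using ij by simp
    qed
  qed
  have inj: "inj_on (f b) (T b)" if "b \<in> B" for b
    using Bpos[OF that] unfolding f_def by (auto simp: inj_on_def prod_eq_iff)
  have "ecard S = (\<Sum>b\<in>B. ecard (f b ` T b))"
    unfolding Seq by (rule ecard_UN[OF finB disj])
  also have "\<dots> = (\<Sum>b\<in>B. ecard (T b))"
    using inj by (intro sum.cong) (auto simp: ecard_image)
  finally show ?thesis unfolding S_def T_def B_def Pn_def .
qed

end
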